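(* Let $k$ be a field, $H=\langle a_1,\dots,a_\ell\rangle$ a numerical semigroup with $\gcd(a_1,\dots,a_\ell)=1$, $R=k[[H]]=k[[t^{a_1},\dots,t^{a_\ell}]]\subseteq k[[t]]$, $f=\mathrm f(H)$ the Frobenius number and $\mathrm{PF}(H)$ the set of pseudo-Frobenius numbers, and $K=\sum_{c\in\mathrm{PF}(H)}Rt^{f-c}$. Suppose that $R$ is a $2$-AGL ring. Then $$K/R=\bigoplus_{c\in\mathrm{PF}(H)\setminus\{f\}}R\cdot\overline{t^{f-c}}$$ (an internal direct sum), where $\overline{(\ast)}$ denotes the image in $K/R$.
   Context: $\mathrm f(H)=\max(\mathbb Z\setminus H)$; $\mathrm{PF}(H)=\{n\in\mathbb Z\setminus H: n+a_i\in H \text{ for all } i\}$. $K$ is a canonical fractional ideal of $R$ (i.e. $R\subseteq K\subseteq\overline R=k[[t]]$ and $K\cong\mathrm K_R$). $R$ is $2$-AGL if it has a canonical ideal $I$ (proper ideal $\cong\mathrm K_R$) containing a parameter ideal as a reduction with $\mathrm e_1(I)=\mathrm e_0(I)-\ell_R(R/I)+2$; equivalently $\ell_R(R[K]/K)=2$. *)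

theory Defs
  imports "HOL-Computational_Algebra.Formal_Power_Series"
begin

definition sgp_gen :: "nat list \<Rightarrow> int set" where
  "sgp_gen a = {int (\<Sum>i<length a. c i * a ! i) | c. True}"

definition frob :: "int set \<Rightarrow> int" where
  "frob H = (GREATEST n. n \<notin> H)"

definition PF :: "nat list \<Rightarrow> int set" where
  "PF a = {n. n \<notin> sgp_gen a \<and> (\<forall>i<length a. n + int (a ! i) \<in> sgp_gen a)}"

definition sgp_ring :: "int set \<Rightarrow> 'a::field fps set" where
  "sgp_ring H = {p. \<forall>n. fps_nth p n \<noteq> 0 \<longrightarrow> int n \<in> H}"

text \<open>Monomial t^m (m an integer, used only for m >= 0).\<close>
definition tpow :: "int \<Rightarrow> 'a::field fps" where
  "tpow m = fps_X ^ nat m"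

definition canon_K :: "nat list \<Rightarrow> 'a::field fps set" where
  "canon_K a = {x. \<exists>r. (\<forall>c\<in>PF a. r c \<in> sgp_ring (sgp_gen a)) \<and>
      x = (\<Sum>c\<in>PF a. r c * tpow (frob (sgp_gen a) - c))}"

definition is_submod :: "'a::field fps set \<Rightarrow> 'a fps set \<Rightarrow> bool" where
  "is_submod R M \<longleftrightarrow> 0 \<in> M \<and> (\<forall>x\<in>M. \<forall>y\<in>M. x + y \<in> M) \<and> (\<forall>r\<in>R. \<forall>x\<in>M. r * x \<in> M)"

definition mod_length_eq :: "'a::field fps set \<Rightarrow> 'a fps set \<Rightarrow> 'a fps set \<Rightarrow> nat \<Rightarrow> bool" where
  "mod_length_eq R N M n \<longleftrightarrow> (\<exists>C::nat \<Rightarrow> 'a fps set. C 0 = N \<and> C n = M \<and>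
      (\<forall>i\<le>n. is_submod R (C i)) \<and>
      (\<forall>i<n. C i \<subset> C (Suc i) \<and>
         \<not> (\<exists>L. is_submod R L \<and> C i \<subset> L \<and> L \<subset> C (Suc i))))"

definition ring_adj :: "'a::field fps set \<Rightarrow> 'a fps set \<Rightarrow> 'a fps set" where
  "ring_adj R K = \<Inter>{S. R \<subseteq> S \<and> K \<subseteq> S \<and> 1 \<in> S \<and>
      (\<forall>x\<in>S. \<forall>y\<in>S. x + y \<in> S \<and> x * y \<in> S \<and> - x \<in> S)}"

text \<open>2-AGL, via the equivalent characterization l_R(R[K]/K) = 2.\<close>
definition two_AGL :: "nat list \<Rightarrow> 'a::field itself \<Rightarrow> bool" where
  "two_AGL a _ \<longleftrightarrow> (let R = (sgp_ring (sgp_gen a) :: 'a fps set); K = canon_K a in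
      mod_length_eq R K (ring_adj R K) 2)"

end

theory Submission
  imports Defs
begin

lemma sr_mem: "p \<in> sgp_ring H \<longleftrightarrow> (\<forall>n. fps_nth p n \<noteq> 0 \<longrightarrow> int n \<in> H)"
  by (simp add: sgp_ring_def)

lemma sr_add: "p \<in> sgp_ring H \<Longrightarrow> q \<in> sgp_ring H \<Longrightarrow> p + q \<in> sgp_ring H"
  unfolding sr_mem by (metis add_0 add.right_neutral fps_add_nth)

lemma sr_diff: "p \<in> sgp_ring H \<Longrightarrow> q \<in> sgp_ring H \<Longrightarrow> p - q \<in> sgp_ring H"
  unfolding sr_mem by (metis diff_zero diff_self fps_sub_nth)

lemma sr_const: "0 \<in> H \<Longrightarrow> fps_const c \<in> sgp_ring H"
  by (auto simp: sgp_ring_def)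

lemma sr_X: "(fps_X ^ n :: 'a::field fps) \<in> sgp_ring H \<longleftrightarrow> int n \<in> H"
  by (auto simp: sgp_ring_def)

lemma sr_mult:
  assumes cl: "\<And>x y. x \<in> H \<Longrightarrow> y \<in> H \<Longrightarrow> x + y \<in> H"
    and p: "p \<in> sgp_ring H" and q: "q \<in> sgp_ring H"
  shows "p * q \<in> sgp_ring H"
  unfolding sr_mem
proof (intro allI impI)
  fix n assume "fps_nth (p * q) n \<noteq> 0"
  then have "(\<Sum>i=0..n. fps_nth p i * fps_nth q (n - i)) \<noteq> 0" by (simp add: fps_mult_nth)
  then obtain i where i: "i \<in> {0..n}" "fps_nth p i * fps_nth q (n-i) \<noteq> 0"
    by (meson sum.neutral)
  then have "int i \<in> H" "int (n-i) \<in> H" using p q by (auto simp: sr_mem)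
  then have "int i + int (n - i) \<in> H" using cl by blast
  then show "int n \<in> H" using i(1) by (simp add: of_nat_diff)
qed

lemma sr_inv_aux:
  assumes cl: "\<And>x y. x \<in> H \<Longrightarrow> y \<in> H \<Longrightarrow> x + y \<in> H" and z: "0 \<in> H"
    and p: "p \<in> sgp_ring H"
  shows "int n \<notin> H \<Longrightarrow> fps_right_inverse_constructor p y n = 0"
proof (induction n rule: less_induct)
  case (less n)
  show ?case
  proof (cases n)
    case 0 then show ?thesis using less.prems z by simp
  next
    case (Suc m)
    have "\<forall>i\<in>{1..n}. fps_nth p i * fps_right_inverse_constructor p y (n - i) = 0"
    proof
      fix i assume i: "i \<in> {1..n}"
      show "fps_nth p i * fps_right_inverse_constructor p y (n - i) = 0"
      proof (rule ccontr)
        assume "\<not> ?thesis"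
        then have a: "fps_nth p i \<noteq> 0" and b: "fps_right_inverse_constructor p y (n - i) \<noteq> 0" by auto
        from a p have "int i \<in> H" by (auto simp: sr_mem)
        moreover from b less.IH[of "n-i"] i have "int (n-i) \<in> H" by auto
        ultimately have "int i + int (n-i) \<in> H" using cl by blast
        then show False using i less.prems by (simp add: of_nat_diff)
      qed
    qed
    moreover have "fps_right_inverse_constructor p y n = - y * (\<Sum>i\<in>{1..n}. fps_nth p i * fps_right_inverse_constructor p y (n - i))"
      using Suc by (simp del: sum.cl_ivl_Suc)
    ultimately show ?thesis by (simp only: sum.neutral) simp
  qed
qed

lemma sr_inverse:
  assumes cl: "\<And>x y. x \<in> H \<Longrightarrow> y \<in> H \<Longrightarrow> x + y \<in> H" and z: "0 \<in> H"
    and p: "p \<in> sgp_ring H"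
  shows "inverse p \<in> sgp_ring H"
  unfolding sr_mem fps_inverse_def using sr_inv_aux[OF cl z p] by auto

lemma sr_zero: "0 \<in> sgp_ring H" by (simp add: sr_mem)
lemma sr_one: "0 \<in> H \<Longrightarrow> 1 \<in> sgp_ring H" by (simp add: sr_mem fps_one_nth)

lemma simple_step:
  fixes A B :: "'a::field fps set"
  assumes cl: "\<And>x y. x \<in> H \<Longrightarrow> y \<in> H \<Longrightarrow> x + y \<in> H" and z: "0 \<in> H"
    and sA: "is_submod (sgp_ring H) A" and sB: "is_submod (sgp_ring H) B" and AB: "A \<subset> B"
    and mx: "\<not> (\<exists>L. is_submod (sgp_ring H) L \<and> A \<subset> L \<and> L \<subset> B)"
  shows "\<exists>u. \<forall>b\<in>B. \<exists>a\<in>A. \<exists>c. b = a + fps_const c * u"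
proof -
  let ?R = "sgp_ring H :: 'a fps set"
  obtain u where u: "u \<in> B" "u \<notin> A" using AB by blast
  define L1 where "L1 = {a + r*u | a r. a \<in> A \<and> r \<in> ?R}"
  have s1: "is_submod ?R L1"
    unfolding is_submod_def
  proof (intro conjI ballI)
    show "0 \<in> L1" unfolding L1_def using sA sr_zero[of H]
      by (auto simp: is_submod_def intro!: exI[of _ 0])
    fix x y assume "x \<in> L1" "y \<in> L1"
    then obtain a1 r1 a2 r2 where "x = a1 + r1*u" "y = a2 + r2*u" "a1 \<in> A" "a2 \<in> A" "r1 \<in> ?R" "r2 \<in> ?R"
      unfolding L1_def by blast
    moreover have "x + y = (a1 + a2) + (r1 + r2) * u" using calculation by (simp add: algebra_simps)
    moreover have "a1 + a2 \<in> A" using sA calculation by (simp add: is_submod_def)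
    moreover have "r1 + r2 \<in> ?R" using sr_add calculation by blast
    ultimately show "x + y \<in> L1" unfolding L1_def by blast
  next
    fix r x assume r: "r \<in> ?R" and "x \<in> L1"
    then obtain a1 r1 where "x = a1 + r1*u" "a1 \<in> A" "r1 \<in> ?R"
      unfolding L1_def by blast
    moreover have "r * x = r * a1 + (r * r1) * u" using calculation by (simp add: algebra_simps)
    moreover have "r * a1 \<in> A" using sA calculation r by (simp add: is_submod_def)
    moreover have "r * r1 \<in> ?R" using sr_mult[OF cl r] calculation by blast
    ultimately show "r * x \<in> L1" unfolding L1_def by blast
  qed
  have "A \<subseteq> L1"
  proof
    fix x assume "x \<in> A" then have "x = x + 0 * u \<and> x \<in> A \<and> 0 \<in> ?R" using sr_zero by simp
    then show "x \<in> L1" unfolding L1_def by blast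
  qed
  moreover have "u \<in> L1"
  proof -
    have "u = 0 + 1 * u \<and> 0 \<in> A \<and> 1 \<in> ?R" using sA sr_one[OF z] by (simp add: is_submod_def)
    then show ?thesis unfolding L1_def by blast
  qed
  moreover have "L1 \<subseteq> B" unfolding L1_def using sB u(1) AB by (auto simp: is_submod_def)
  ultimately have L1B: "L1 = B" using mx s1 u by blast
  define L2 where "L2 = {a + m*u | a m. a \<in> A \<and> m \<in> ?R \<and> fps_nth m 0 = 0}"
  have s2: "is_submod ?R L2"
    unfolding is_submod_def
  proof (intro conjI ballI)
    show "0 \<in> L2" unfolding L2_def using sA sr_zero[of H]
      by (auto simp: is_submod_def intro!: exI[of _ 0])
    fix x y assume "x \<in> L2" "y \<in> L2"
    then obtain a1 r1 a2 r2 where "x = a1 + r1*u" "y = a2 + r2*u" "a1 \<in> A" "a2 \<in> A" "r1 \<in> ?R" "r2 \<in> ?R"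
       "fps_nth r1 0 = 0" "fps_nth r2 0 = 0"
      unfolding L2_def by blast
    moreover have "x + y = (a1 + a2) + (r1 + r2) * u" using calculation by (simp add: algebra_simps)
    moreover have "a1 + a2 \<in> A" using sA calculation by (simp add: is_submod_def)
    moreover have "r1 + r2 \<in> ?R" using sr_add calculation by blast
    moreover have "fps_nth (r1 + r2) 0 = 0" using calculation by simp
    ultimately show "x + y \<in> L2" unfolding L2_def by blast
  next
    fix r x assume r: "r \<in> ?R" and "x \<in> L2"
    then obtain a1 r1 where "x = a1 + r1*u" "a1 \<in> A" "r1 \<in> ?R" "fps_nth r1 0 = 0"
      unfolding L2_def by blast
    moreover have "r * x = r * a1 + (r * r1) * u" using calculation by (simp add: algebra_simps)
    moreover have "r * a1 \<in> A" using sA calculation r by (simp add: is_submod_def)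
    moreover have "r * r1 \<in> ?R" using sr_mult[OF cl r] calculation by blast
    moreover have "fps_nth (r * r1) 0 = 0" using calculation by simp
    ultimately show "r * x \<in> L2" unfolding L2_def by blast
  qed
  have AL2: "A \<subseteq> L2"
  proof
    fix x assume "x \<in> A" then have "x = x + 0 * u \<and> x \<in> A \<and> 0 \<in> ?R \<and> fps_nth 0 0 = (0::'a)" using sr_zero by simp
    then show "x \<in> L2" unfolding L2_def by blast
  qed
  have L2B: "L2 \<subseteq> B" unfolding L2_def using sB u(1) AB by (auto simp: is_submod_def)
  have "u \<notin> L2"
  proof
    assume "u \<in> L2"
    then obtain a m where am: "u = a + m*u" "a \<in> A" "m \<in> ?R" "fps_nth m 0 = 0"
      unfolding L2_def by blast
    have e: "(1 - m) * u = a" using am(1) by (simp add: algebra_simps)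
    have i1: "1 - m \<in> ?R" using sr_diff[OF sr_one[OF z] am(3)] .
    have n0: "fps_nth (1 - m) 0 \<noteq> 0" using am(4) by simp
    have w: "inverse (1 - m) \<in> ?R" using sr_inverse[OF cl z i1] .
    have "u = inverse (1 - m) * ((1 - m) * u)"
      using inverse_mult_eq_1[OF n0] by (simp add: mult.assoc[symmetric])
    also have "\<dots> = inverse (1 - m) * a" using e by simp
    finally have "u \<in> A" using sA w am(2) by (simp add: is_submod_def)
    then show False using u by blast
  qed
  then have "L2 \<subset> B" using L2B u by blast
  then have "L2 = A" using mx s2 AL2 by blast
  then have mA: "\<And>m. m \<in> ?R \<Longrightarrow> fps_nth m 0 = 0 \<Longrightarrow> m * u \<in> A"
  proof -
    fix m assume "m \<in> ?R" "fps_nth m 0 = 0"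
    moreover have "0 \<in> A" using sA by (simp add: is_submod_def)
    ultimately have "m * u = 0 + m * u \<and> 0 \<in> A \<and> m \<in> ?R \<and> fps_nth m 0 = 0" by simp
    then have "m * u \<in> L2" unfolding L2_def by blast
    then show "m * u \<in> A" using \<open>L2 = A\<close> by simp
  qed
  show ?thesis
  proof (intro exI ballI)
    fix b assume "b \<in> B"
    then obtain a r where ar: "b = a + r*u" "a \<in> A" "r \<in> ?R" unfolding L1B[symmetric] L1_def by blast
    define m where "m = r - fps_const (fps_nth r 0)"
    have "m \<in> ?R" unfolding m_def using sr_diff[OF ar(3) sr_const[OF z]] .
    moreover have "fps_nth m 0 = 0" unfolding m_def by simp
    ultimately have "m * u \<in> A" using mA by blast
    then have "a + m * u \<in> A" using sA ar(2) by (simp add: is_submod_def)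
    moreover have "b = (a + m * u) + fps_const (fps_nth r 0) * u"
      unfolding ar(1) m_def by (simp add: algebra_simps)
    ultimately show "\<exists>a\<in>A. \<exists>c. b = a + fps_const c * u" by blast
  qed
qed


lemma det3:
  fixes m1 m2 m3 l1 l2 l3 U1 U2 U3 V1 V2 V3 :: "'a::field"
  assumes "m1*U1 + l1*V1 = 1" "m1*U2 + l1*V2 = 0" "m1*U3 + l1*V3 = 0"
    "m2*U1 + l2*V1 = 0" "m2*U2 + l2*V2 = 1" "m2*U3 + l2*V3 = 0"
    "m3*U1 + l3*V1 = 0" "m3*U2 + l3*V2 = 0" "m3*U3 + l3*V3 = 1"
  shows False
proof -
  have "(m1*U1 + l1*V1)*((m2*U2 + l2*V2)*(m3*U3 + l3*V3) - (m2*U3 + l2*V3)*(m3*U2 + l3*V2))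
      - (m1*U2 + l1*V2)*((m2*U1 + l2*V1)*(m3*U3 + l3*V3) - (m2*U3 + l2*V3)*(m3*U1 + l3*V1))
      + (m1*U3 + l1*V3)*((m2*U1 + l2*V1)*(m3*U2 + l3*V2) - (m2*U2 + l2*V2)*(m3*U1 + l3*V1)) = 0"
    by algebra
  then show False by (simp add: assms)
qed

lemma H_mem: "n \<in> sgp_gen a \<longleftrightarrow> (\<exists>c. n = int (\<Sum>i<length a. c i * a ! i))"
  by (auto simp: sgp_gen_def)

lemma H_nonneg: "n \<in> sgp_gen a \<Longrightarrow> 0 \<le> n"
  by (metis H_mem of_nat_0_le_iff)

lemma H_zero: "0 \<in> sgp_gen a"
  unfolding H_mem by (rule exI[of _ "\<lambda>_. 0"]) simp

lemma H_add: "x \<in> sgp_gen a \<Longrightarrow> y \<in> sgp_gen a \<Longrightarrow> x + y \<in> sgp_gen a"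
proof -
  assume "x \<in> sgp_gen a" "y \<in> sgp_gen a"
  then obtain c1 c2 where "x = int (\<Sum>i<length a. c1 i * a ! i)" "y = int (\<Sum>i<length a. c2 i * a ! i)"
    by (auto simp: H_mem)
  then have "x + y = int (\<Sum>i<length a. (\<lambda>i. c1 i + c2 i) i * a ! i)"
    by (simp add: algebra_simps sum.distrib)
  then show ?thesis unfolding H_mem by (intro exI[of _ "\<lambda>i. c1 i + c2 i"])
qed

lemma H_gen: "i < length a \<Longrightarrow> int (a ! i) \<in> sgp_gen a"
proof -
  assume i: "i < length a"
  have "(\<Sum>j<length a. (\<lambda>j. if j = i then 1 else 0) j * a ! j) = (\<Sum>j<length a. if j = i then a ! j else 0)"
    by (rule sum.cong) auto
  also have "\<dots> = a ! i" using i by simp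
  finally show ?thesis unfolding H_mem by (intro exI[of _ "\<lambda>j. if j = i then 1 else 0"]) simp
qed

lemma H_mult: "x \<in> sgp_gen a \<Longrightarrow> int k * x \<in> sgp_gen a"
  by (induction k) (auto simp: H_zero algebra_simps intro: H_add)

lemma H_decomp:
  assumes "h \<in> sgp_gen a" "h \<noteq> 0"
  shows "\<exists>i<length a. h - int (a ! i) \<in> sgp_gen a"
proof -
  obtain c where c: "h = int (\<Sum>i<length a. c i * a ! i)" using assms by (auto simp: H_mem)
  have "\<exists>j<length a. c j * a ! j \<noteq> 0" using assms(2) c by (metis (no_types, lifting) lessThan_iff of_nat_0 sum.neutral)
  then obtain j where j: "j < length a" "c j \<noteq> 0" by auto
  define c' where "c' = c(j := c j - 1)"
  have "\<forall>i. c i = c' i + (if i = j then 1 else 0)" using j unfolding c'_def by auto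
  then have "(\<Sum>i<length a. c i * a ! i) = (\<Sum>i<length a. c' i * a ! i + (if i = j then 1 else 0) * a ! i)"
    by (metis (no_types, lifting) distrib_right)
  also have "\<dots> = (\<Sum>i<length a. c' i * a ! i) + (\<Sum>i<length a. if i = j then a ! i else 0)"
    unfolding sum.distrib by (intro arg_cong2[where f="(+)"] sum.cong) auto
  also have "\<dots> = (\<Sum>i<length a. c' i * a ! i) + a ! j"
    using j by simp
  finally have "h - int (a ! j) = int (\<Sum>i<length a. c' i * a ! i)" using c by simp
  then show ?thesis using j unfolding H_mem by (intro exI[of _ j]) (auto intro!: exI[of _ c'])
qed

lemma PF_plus:
  assumes "c \<in> PF a" "h \<in> sgp_gen a" "h \<noteq> 0"
  shows "c + h \<in> sgp_gen a"
proof -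
  obtain i where i: "i < length a" "h - int (a ! i) \<in> sgp_gen a" using H_decomp assms(2,3) by blast
  have "c + int (a ! i) \<in> sgp_gen a" using assms(1) i(1) by (simp add: PF_def)
  from H_add[OF this i(2)] show ?thesis by simp
qed

lemma bez: "\<exists>z::nat \<Rightarrow> int. (\<Sum>i<length a. z i * int (a ! i)) = int (Gcd (set a))"
proof (induction a)
  case Nil then show ?case by simp
next
  case (Cons x xs)
  then obtain z where z: "(\<Sum>i<length xs. z i * int (xs ! i)) = int (Gcd (set xs))" by blast
  obtain u v where uv: "u * int x + v * int (Gcd (set xs)) = gcd (int x) (int (Gcd (set xs)))"
    using bezout_int by blast
  define z' where "z' = (\<lambda>i. case i of 0 \<Rightarrow> u | Suc j \<Rightarrow> v * z j)"
  have "(\<Sum>i<length (x#xs). z' i * int ((x#xs) ! i)) = u * int x + (\<Sum>i<length xs. v * (z i * int (xs ! i)))"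
    by (simp add: z'_def sum.lessThan_Suc_shift algebra_simps del: sum.lessThan_Suc)
  also have "\<dots> = u * int x + v * int (Gcd (set xs))" by (simp add: sum_distrib_left[symmetric] z)
  also have "\<dots> = int (Gcd (set (x#xs)))" using uv by simp
  finally show ?case by blast
qed

lemma cofin:
  assumes "Gcd (set a) = 1"
  shows "\<exists>N. \<forall>n. N \<le> n \<longrightarrow> n \<in> sgp_gen a"
proof -
  obtain z where z: "(\<Sum>i<length a. z i * int (a ! i)) = 1" using bez[of a] assms by auto
  define P where "P = int (\<Sum>i<length a. nat (max (z i) 0) * a ! i)"
  define Q where "Q = int (\<Sum>i<length a. nat (max (- z i) 0) * a ! i)"
  have PH: "P \<in> sgp_gen a" unfolding P_def H_mem by (intro exI[of _ "\<lambda>i. nat (max (z i) 0)"]) simp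
  have QH: "Q \<in> sgp_gen a" unfolding Q_def H_mem by (intro exI[of _ "\<lambda>i. nat (max (- z i) 0)"]) simp
  have "P - Q = (\<Sum>i<length a. (max (z i) 0 - max (- z i) 0) * int (a ! i))"
    unfolding P_def Q_def by (simp add: of_nat_sum sum_subtractf algebra_simps)
  also have "\<dots> = (\<Sum>i<length a. z i * int (a ! i))"
    by (rule sum.cong) (auto simp: max_def)
  finally have PQ: "P = Q + 1" using z by simp
  have Q0: "0 \<le> Q" using H_nonneg QH .
  show ?thesis
  proof (intro exI allI impI)
    fix n assume n: "Q * Q \<le> n"
    show "n \<in> sgp_gen a"
    proof (cases "Q = 0")
      case True
      then have "1 \<in> sgp_gen a" using PH PQ by simp
      from H_mult[OF this, of "nat n"] show ?thesis using n True by simp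
    next
      case False
      then have Qp: "0 < Q" using Q0 by simp
      define q where "q = n div Q"
      define r where "r = n mod Q"
      have r: "0 \<le> r" "r < Q" using Qp unfolding r_def by auto
      have "Q * Q div Q \<le> q" unfolding q_def using zdiv_mono1[OF n Qp] .
      then have qQ: "Q \<le> q" using Qp by simp
      have nqr: "n = (q - r) * Q + r * P" using PQ unfolding q_def r_def
        by (simp add: algebra_simps)
      have "int (nat (q - r)) * Q \<in> sgp_gen a" using H_mult[OF QH] by blast
      moreover have "int (nat r) * P \<in> sgp_gen a" using H_mult[OF PH] by blast
      ultimately have "int (nat (q - r)) * Q + int (nat r) * P \<in> sgp_gen a" by (rule H_add)
      then show ?thesis using nqr r qQ by simp
    qed
  qed
qed

lemma frob_props:
  assumes "Gcd (set a) = 1"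
  shows "frob (sgp_gen a) \<notin> sgp_gen a" "\<And>n. n \<notin> sgp_gen a \<Longrightarrow> n \<le> frob (sgp_gen a)"
proof -
  obtain N where N: "\<forall>n. N \<le> n \<longrightarrow> n \<in> sgp_gen a" using cofin[OF assms] by blast
  define F where "F = {n. n \<notin> sgp_gen a \<and> -1 \<le> n}"
  have "F \<subseteq> {-1..N}"
  proof
    fix x assume "x \<in> F"
    then have "x \<notin> sgp_gen a" "-1 \<le> x" unfolding F_def by auto
    moreover have "x \<le> N" using N calculation(1) by (meson linorder_le_cases)
    ultimately show "x \<in> {-1..N}" by simp
  qed
  then have fin: "finite F" by (rule finite_subset) simp
  have m1: "-1 \<in> F" unfolding F_def using H_nonneg by force
  define m where "m = Max F"
  have mF: "m \<in> F" unfolding m_def using fin m1 Max_in by blast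
  have mge: "\<And>n. n \<notin> sgp_gen a \<Longrightarrow> n \<le> m"
  proof -
    fix n assume "n \<notin> sgp_gen a"
    show "n \<le> m"
    proof (cases "-1 \<le> n")
      case True then have "n \<in> F" unfolding F_def using \<open>n \<notin> sgp_gen a\<close> by simp
      then show ?thesis unfolding m_def using fin by simp
    next
      case False then show ?thesis using mF unfolding F_def by simp
    qed
  qed
  have "frob (sgp_gen a) = m" unfolding frob_def
    by (rule Greatest_equality) (use mF mge in \<open>auto simp: F_def\<close>)
  then show "frob (sgp_gen a) \<notin> sgp_gen a" "\<And>n. n \<notin> sgp_gen a \<Longrightarrow> n \<le> frob (sgp_gen a)"
    using mF mge unfolding F_def by auto
qed


lemma K_vanish:
  assumes fmax: "\<And>n. n \<notin> sgp_gen a \<Longrightarrow> n \<le> frob (sgp_gen a)"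
    and x: "x \<in> (canon_K a :: 'a::field fps set)"
    and e: "frob (sgp_gen a) - int e \<in> sgp_gen a"
  shows "fps_nth x e = 0"
proof -
  let ?H = "sgp_gen a" and ?f = "frob (sgp_gen a)"
  obtain r where r: "\<forall>c\<in>PF a. r c \<in> sgp_ring ?H" "x = (\<Sum>c\<in>PF a. r c * tpow (?f - c))"
    using x unfolding canon_K_def by blast
  have "\<forall>c\<in>PF a. fps_nth (r c * tpow (?f - c)) e = 0"
  proof
    fix c assume c: "c \<in> PF a"
    have cH: "c \<notin> ?H" using c by (simp add: PF_def)
    have cf: "c \<le> ?f" using fmax cH by blast
    show "fps_nth (r c * tpow (?f - c)) e = 0"
    proof (rule ccontr)
      assume ne: "fps_nth (r c * tpow (?f - c)) e \<noteq> 0"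
      then have "\<not> e < nat (?f - c)" "fps_nth (r c) (e - nat (?f - c)) \<noteq> 0"
        by (auto simp: tpow_def fps_X_power_mult_right_nth split: if_splits)
      moreover have "int (e - nat (?f - c)) \<in> ?H" using r(1) c calculation(2) unfolding sr_mem by blast
      ultimately have "int e - ?f + c \<in> ?H" using cf by (simp add: of_nat_diff algebra_simps)
      from H_add[OF this e] have "c \<in> ?H" by simp
      then show False using cH by blast
    qed
  qed
  then show ?thesis by (simp add: r(2) fps_sum_nth)
qed

lemma PF_above:
  assumes pos: "\<forall>x\<in>set a. x > 0"
    and fmax: "\<And>n. n \<notin> sgp_gen a \<Longrightarrow> n \<le> frob (sgp_gen a)"
  shows "g \<notin> sgp_gen a \<Longrightarrow> \<exists>d\<in>PF a. d - g \<in> sgp_gen a"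
proof (induction "nat (frob (sgp_gen a) - g)" arbitrary: g rule: less_induct)
  case less
  show ?case
  proof (cases "g \<in> PF a")
    case True then show ?thesis by (intro bexI[of _ g]) (simp_all add: H_zero)
  next
    case False
    then obtain i where i: "i < length a" "g + int (a ! i) \<notin> sgp_gen a"
      using less.prems unfolding PF_def by auto
    have ai: "a ! i > 0" using pos nth_mem[OF i(1)] by blast
    have "g + int (a ! i) \<le> frob (sgp_gen a)" using fmax i(2) by blast
    then have "nat (frob (sgp_gen a) - (g + int (a ! i))) < nat (frob (sgp_gen a) - g)"
      using ai by simp
    from less.hyps[OF this i(2)] obtain d where d: "d \<in> PF a" "d - (g + int (a ! i)) \<in> sgp_gen a"
      by blast
    from H_add[OF d(2) H_gen[OF i(1)]] have "d - g \<in> sgp_gen a" by simp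
    then show ?thesis using d(1) by blast
  qed
qed

lemma K_mono:
  assumes pos: "\<forall>x\<in>set a. x > 0"
    and fmax: "\<And>n. n \<notin> sgp_gen a \<Longrightarrow> n \<le> frob (sgp_gen a)"
    and finPF: "finite (PF a)"
    and e: "frob (sgp_gen a) - int e \<notin> sgp_gen a"
  shows "(fps_X ^ e :: 'a::field fps) \<in> canon_K a"
proof -
  let ?H = "sgp_gen a" and ?f = "frob (sgp_gen a)"
  define g where "g = ?f - int e"
  obtain d where d: "d \<in> PF a" "d - g \<in> ?H" using PF_above[OF pos fmax] e unfolding g_def by blast
  have dH: "d \<notin> ?H" using d(1) by (simp add: PF_def)
  have df: "d \<le> ?f" using fmax dH by blast
  have dg: "0 \<le> d - g" using H_nonneg d(2) .
  define r where "r = (\<lambda>c. if c = d then fps_X ^ nat (d - g) else (0::'a fps))"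
  have rR: "\<forall>c\<in>PF a. r c \<in> sgp_ring ?H"
    unfolding r_def using sr_X[of "nat (d - g)" ?H] dg d(2) sr_zero by auto
  have "(\<Sum>c\<in>PF a. r c * tpow (?f - c)) = (\<Sum>c\<in>PF a. if c = d then fps_X ^ nat (d - g) * tpow (?f - d) else 0)"
    by (rule sum.cong) (auto simp: r_def)
  also have "\<dots> = fps_X ^ nat (d - g) * tpow (?f - d)" using d(1) finPF by simp
  also have "\<dots> = fps_X ^ (nat (d - g) + nat (?f - d))" by (simp add: tpow_def power_add)
  also have "nat (d - g) + nat (?f - d) = e" using dg df unfolding g_def by linarith
  finally have "fps_X ^ e = (\<Sum>c\<in>PF a. r c * tpow (?f - c))" by simp
  then show ?thesis unfolding canon_K_def using rR by blast
qed

lemma adj_mult: "p \<in> K \<Longrightarrow> q \<in> K \<Longrightarrow> p * q \<in> ring_adj R K"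
  unfolding ring_adj_def by blast

lemma adj_sub: "K \<subseteq> ring_adj R K"
  unfolding ring_adj_def by blast


theorem proposition2p4:
  fixes a :: "nat list"
  assumes pos: "\<forall>x\<in>set a. x > 0"
    and gcd1: "Gcd (set a) = 1"
    and agl: "two_AGL a TYPE('a::field)"
  defines "R \<equiv> (sgp_ring (sgp_gen a) :: 'a fps set)"
    and "f \<equiv> frob (sgp_gen a)"
    and "G \<equiv> PF a - {frob (sgp_gen a)}"
  shows "(\<forall>x\<in>(canon_K a :: 'a fps set). \<exists>r. (\<forall>c\<in>G. r c \<in> R) \<and>
            x - (\<Sum>c\<in>G. r c * tpow (f - c)) \<in> R)
       \<and> (\<forall>r. (\<forall>c\<in>G. r c \<in> R) \<longrightarrow> (\<Sum>c\<in>G. r c * tpow (f - c)) \<in> R \<longrightarrow>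
            (\<forall>c\<in>G. r c * tpow (f - c) \<in> R))"
proof -
  let ?H = "sgp_gen a"
  have fdef: "frob ?H = f" using f_def by simp
  have Gdef: "G = PF a - {f}" using G_def fdef by simp
  have fH: "f \<notin> ?H" using frob_props(1)[OF gcd1] fdef by simp
  have fmax: "\<And>n. n \<notin> ?H \<Longrightarrow> n \<le> f" using frob_props(2)[OF gcd1] fdef by simp
  have fmax': "\<And>n. n \<notin> ?H \<Longrightarrow> n \<le> frob ?H" using frob_props(2)[OF gcd1] .
  have ane: "a \<noteq> []" using gcd1 by auto
  have finPF: "finite (PF a)"
  proof -
    have "PF a \<subseteq> {- int (a!0) .. f}"
    proof
      fix c assume c: "c \<in> PF a"
      then have "c \<notin> ?H" "c + int (a!0) \<in> ?H" using ane unfolding PF_def by auto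
      then show "c \<in> {- int (a!0) .. f}" using fmax[of c] H_nonneg[of "c + int (a!0)" a] by simp
    qed
    then show ?thesis by (rule finite_subset) simp
  qed
  have finG: "finite G" unfolding Gdef using finPF by simp
  have Gprops: "\<And>c. c \<in> G \<Longrightarrow> c \<in> PF a \<and> c \<notin> ?H \<and> c \<noteq> f \<and> f - c \<notin> ?H \<and> 0 \<le> c \<and> c \<le> f"
  proof -
    fix c assume c: "c \<in> G"
    then have cPF: "c \<in> PF a" and cf: "c \<noteq> f" unfolding Gdef by auto
    have cH: "c \<notin> ?H" using cPF by (simp add: PF_def)
    have cle: "c \<le> f" using fmax cH by blast
    have fc: "f - c \<notin> ?H"
    proof
      assume "f - c \<in> ?H"
      from PF_plus[OF cPF this] cf have "c + (f - c) \<in> ?H" by simp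
      then show False using fH by simp
    qed
    have "0 \<le> c" using fmax[OF fc] by simp
    then show "c \<in> PF a \<and> c \<notin> ?H \<and> c \<noteq> f \<and> f - c \<notin> ?H \<and> 0 \<le> c \<and> c \<le> f"
      using cPF cH cf fc cle by simp
  qed
  show ?thesis
  proof (intro conjI allI ballI impI)
    fix x assume x: "x \<in> (canon_K a :: 'a fps set)"
    obtain r where r: "\<forall>c\<in>PF a. r c \<in> sgp_ring ?H" "x = (\<Sum>c\<in>PF a. r c * tpow (f - c))"
      using x unfolding canon_K_def fdef by blast
    show "\<exists>r. (\<forall>c\<in>G. r c \<in> R) \<and> x - (\<Sum>c\<in>G. r c * tpow (f - c)) \<in> R"
    proof (intro exI conjI)
      show "\<forall>c\<in>G. r c \<in> R" using r(1) unfolding Gdef R_def by auto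
      show "x - (\<Sum>c\<in>G. r c * tpow (f - c)) \<in> R"
      proof (cases "f \<in> PF a")
        case True
        have "x = r f * tpow (f - f) + (\<Sum>c\<in>G. r c * tpow (f - c))"
          unfolding r(2) Gdef using sum.remove[OF finPF True, of "\<lambda>c. r c * tpow (f - c)"] by simp
        then have "x - (\<Sum>c\<in>G. r c * tpow (f - c)) = r f" by (simp add: tpow_def)
        then show ?thesis using r(1) True unfolding R_def by simp
      next
        case False
        then have "G = PF a" unfolding Gdef by simp
        then show ?thesis using r(2) sr_zero unfolding R_def by simp
      qed
    qed
  next
    fix r c0
    assume rR: "\<forall>c\<in>G. r c \<in> R" and sR: "(\<Sum>c\<in>G. r c * tpow (f - c)) \<in> R" and c0: "c0 \<in> G"
    show "r c0 * tpow (f - c0) \<in> R"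
    proof (rule ccontr)
      assume nR: "r c0 * tpow (f - c0) \<notin> R"
      define T where "T = (\<lambda>c. r c * tpow (f - c))"
      obtain n where n: "fps_nth (T c0) n \<noteq> 0" "int n \<notin> ?H"
        using nR unfolding R_def T_def sr_mem by blast
      have "fps_nth (\<Sum>c\<in>G. T c) n = 0" using sR n(2) unfolding R_def T_def sr_mem by blast
      then have s0: "(\<Sum>c\<in>G. fps_nth (T c) n) = 0" by (simp add: fps_sum_nth)
      obtain c' where c': "c' \<in> G" "c' \<noteq> c0" "fps_nth (T c') n \<noteq> 0"
      proof -
        assume Hyp: "\<And>c'. c' \<in> G \<Longrightarrow> c' \<noteq> c0 \<Longrightarrow> fps_nth (T c') n \<noteq> 0 \<Longrightarrow> thesis"
        show thesis
        proof (rule ccontr)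
          assume "\<not> thesis"
          then have "\<forall>c\<in>G - {c0}. fps_nth (T c) n = 0" using Hyp by blast
          then have "(\<Sum>c\<in>G. fps_nth (T c) n) = fps_nth (T c0) n"
            using sum.remove[OF finG c0, of "\<lambda>c. fps_nth (T c) n"] by simp
          then show False using n(1) s0 by simp
        qed
      qed
      have key: "\<And>c. c \<in> G \<Longrightarrow> fps_nth (T c) n \<noteq> 0 \<Longrightarrow> int n - (f - c) \<in> ?H"
      proof -
        fix c assume c: "c \<in> G" and ne: "fps_nth (T c) n \<noteq> 0"
        have cf: "c \<le> f" using Gprops c by simp
        from ne have "\<not> n < nat (f - c)" "fps_nth (r c) (n - nat (f - c)) \<noteq> 0"
          by (auto simp: T_def tpow_def fps_X_power_mult_right_nth split: if_splits)
        moreover have "int (n - nat (f - c)) \<in> ?H"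
          using rR c calculation(2) unfolding R_def sr_mem by blast
        ultimately show "int n - (f - c) \<in> ?H" using cf by (simp add: of_nat_diff algebra_simps)
      qed
      define x where "x = int n"
      define h where "h = x - (f - c0)"
      define h' where "h' = x - (f - c')"
      have hH: "h \<in> ?H" using key[OF c0 n(1)] unfolding h_def x_def .
      have h'H: "h' \<in> ?H" using key[OF c'(1) c'(3)] unfolding h'_def x_def .
      have c0p: "c0 \<in> PF a \<and> c0 \<notin> ?H \<and> c0 \<noteq> f \<and> f - c0 \<notin> ?H \<and> 0 \<le> c0 \<and> c0 \<le> f"
        using Gprops[OF c0] .
      have c'p: "c' \<in> PF a \<and> c' \<notin> ?H \<and> c' \<noteq> f \<and> f - c' \<notin> ?H \<and> 0 \<le> c' \<and> c' \<le> f"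
        using Gprops[OF c'(1)] .
      have hh: "h \<noteq> h'" using c'(2) by (simp add: h_def h'_def)
      have h0: "h \<noteq> 0"
      proof
        assume "h = 0"
        then have e: "h' = c' - c0" by (simp add: h_def h'_def)
        then have "h' \<noteq> 0" using hh \<open>h = 0\<close> by simp
        from PF_plus[of c0 a h'] this c0p h'H have "c0 + h' \<in> ?H" by blast
        then show False using e c'p by simp
      qed
      have h'0: "h' \<noteq> 0"
      proof
        assume "h' = 0"
        then have e: "h = c0 - c'" by (simp add: h_def h'_def)
        then have "h \<noteq> 0" using hh \<open>h' = 0\<close> by simp
        from PF_plus[of c' a h] this c'p hH have "c' + h \<in> ?H" by blast
        then show False using e c0p by simp
      qed
      have xf: "x \<le> f" using fmax n(2) unfolding x_def by blast
      define y where "y = f - x"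
      have y0: "0 \<le> y" using xf unfolding y_def by simp
      have hpos: "0 < h" "0 < h'" using H_nonneg[OF hH] H_nonneg[OF h'H] h0 h'0 by auto
      have fh: "f - h = (f - c0) + y" "f - h' = (f - c') + y" unfolding h_def h'_def y_def by simp_all
      define e1 where "e1 = nat f"
      define e2 where "e2 = nat (f - h)"
      define e3 where "e3 = nat (f - h')"
      have f0: "0 \<le> f" using c0p by simp
      have ie: "int e1 = f" "int e2 = f - h" "int e3 = f - h'"
        unfolding e1_def e2_def e3_def using f0 fh y0 c0p c'p by simp_all
      have "int e1 \<noteq> int e2" "int e1 \<noteq> int e3" "int e2 \<noteq> int e3" unfolding ie using hpos hh by simp_all
      then have dist: "e1 \<noteq> e2" "e1 \<noteq> e3" "e2 \<noteq> e3" by auto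
      have van: "\<And>e. e \<in> {e1, e2, e3} \<Longrightarrow> frob ?H - int e \<in> ?H"
        using ie hH h'H H_zero fdef by auto
      let ?K = "canon_K a :: 'a fps set"
      let ?S = "ring_adj R ?K"
      have KX: "\<And>e. frob ?H - int e \<notin> ?H \<Longrightarrow> (fps_X ^ e :: 'a fps) \<in> ?K"
        using K_mono[OF pos fmax' finPF] by blast
      have K1: "(fps_X ^ nat (f - c0) :: 'a fps) \<in> ?K" using KX c0p fdef by simp
      have K2: "(fps_X ^ nat c0 :: 'a fps) \<in> ?K" using KX c0p fdef by simp
      have K3: "(fps_X ^ nat (f - c') :: 'a fps) \<in> ?K" using KX c'p fdef by simp
      have K4: "(fps_X ^ nat y :: 'a fps) \<in> ?K" using KX[of "nat y"] y0 n(2) fdef unfolding y_def x_def by simp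
      have M1: "(fps_X ^ e1 :: 'a fps) \<in> ?S"
      proof -
        have "e1 = nat (f - c0) + nat c0" unfolding e1_def using c0p by (subst nat_add_distrib[symmetric]) auto
        then have "(fps_X ^ e1 :: 'a fps) = fps_X ^ nat (f - c0) * fps_X ^ nat c0" by (simp add: power_add)
        then show ?thesis using adj_mult[OF K1 K2] by simp
      qed
      have M2: "(fps_X ^ e2 :: 'a fps) \<in> ?S"
      proof -
        have "e2 = nat (f - c0) + nat y" unfolding e2_def using c0p y0 fh by (subst nat_add_distrib[symmetric]) auto
        then have "(fps_X ^ e2 :: 'a fps) = fps_X ^ nat (f - c0) * fps_X ^ nat y" by (simp add: power_add)
        then show ?thesis using adj_mult[OF K1 K4] by simp
      qed
      have M3: "(fps_X ^ e3 :: 'a fps) \<in> ?S"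
      proof -
        have "e3 = nat (f - c') + nat y" unfolding e3_def using c'p y0 fh by (subst nat_add_distrib[symmetric]) auto
        then have "(fps_X ^ e3 :: 'a fps) = fps_X ^ nat (f - c') * fps_X ^ nat y" by (simp add: power_add)
        then show ?thesis using adj_mult[OF K3 K4] by simp
      qed
      have "mod_length_eq R ?K ?S 2" using agl unfolding two_AGL_def Let_def R_def by simp
      then obtain C where C0: "C 0 = ?K \<and> C 2 = ?S \<and> (\<forall>i\<le>2. is_submod R (C i)) \<and>
        (\<forall>i<2. C i \<subset> C (Suc i) \<and> \<not> (\<exists>L. is_submod R L \<and> C i \<subset> L \<and> L \<subset> C (Suc i)))"
        unfolding mod_length_eq_def by (elim exE) (rule that)
      then have C: "C 0 = ?K" "C 2 = ?S" "\<forall>i\<le>2. is_submod R (C i)"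
        "\<forall>i<2. C i \<subset> C (Suc i) \<and> \<not> (\<exists>L. is_submod R L \<and> C i \<subset> L \<and> L \<subset> C (Suc i))"
        by (blast, blast, blast, blast)
      have cl: "\<And>x y. x \<in> ?H \<Longrightarrow> y \<in> ?H \<Longrightarrow> x + y \<in> ?H" by (rule H_add)
      have st0': "C 0 \<subset> C (Suc 0) \<and> \<not> (\<exists>L. is_submod R L \<and> C 0 \<subset> L \<and> L \<subset> C (Suc 0))"
        using C(4) by simp
      have st0: "C 0 \<subset> C 1" "\<not> (\<exists>L. is_submod R L \<and> C 0 \<subset> L \<and> L \<subset> C 1)" using st0' by simp_all
      have st1': "C 1 \<subset> C (Suc 1) \<and> \<not> (\<exists>L. is_submod R L \<and> C 1 \<subset> L \<and> L \<subset> C (Suc 1))"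
        using C(4) by simp
      have s2: "Suc 1 = 2" by simp
      have st1: "C 1 \<subset> C 2" "\<not> (\<exists>L. is_submod R L \<and> C 1 \<subset> L \<and> L \<subset> C 2)" using st1' unfolding s2 by simp_all
      have sm: "is_submod R (C 0)" "is_submod R (C 1)" "is_submod R (C 2)" using C(3) by simp_all
      obtain u where u: "\<forall>b\<in>C 1. \<exists>a'\<in>C 0. \<exists>c. b = a' + fps_const c * u"
        using simple_step[OF cl H_zero sm(1,2)[unfolded R_def] st0[unfolded R_def]] by blast
      obtain v where v: "\<forall>b\<in>C 2. \<exists>a'\<in>C 1. \<exists>c. b = a' + fps_const c * v"
        using simple_step[OF cl H_zero sm(2,3)[unfolded R_def] st1[unfolded R_def]] by blast
      have coef: "\<exists>c1 c2. \<forall>e\<in>{e1,e2,e3}. fps_nth b e = c1 * fps_nth u e + c2 * fps_nth v e"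
        if b: "b \<in> ?S" for b
      proof -
        have "b \<in> C 2" using b C(2) by simp
        then obtain b1 c2 where b1: "b1 \<in> C 1" "b = b1 + fps_const c2 * v" using v by blast
        obtain b0 c1 where b0': "b0 \<in> C 0" "b1 = b0 + fps_const c1 * u" using u b1(1) by blast
        have b0: "b0 \<in> ?K" "b1 = b0 + fps_const c1 * u" using b0' C(1) by simp_all
        have "\<forall>e\<in>{e1,e2,e3}. fps_nth b e = c1 * fps_nth u e + c2 * fps_nth v e"
        proof
          fix e assume e: "e \<in> {e1,e2,e3}"
          have "fps_nth b0 e = 0" using K_vanish[OF fmax' b0(1) van[OF e]] .
          then show "fps_nth b e = c1 * fps_nth u e + c2 * fps_nth v e"
            using b1(2) b0(2) by simp
        qed
        then show ?thesis by blast
      qed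
      obtain m1 l1 where 1: "\<forall>e\<in>{e1,e2,e3}. fps_nth (fps_X ^ e1 :: 'a fps) e = m1 * fps_nth u e + l1 * fps_nth v e"
        using coef[OF M1] by blast
      obtain m2 l2 where 2: "\<forall>e\<in>{e1,e2,e3}. fps_nth (fps_X ^ e2 :: 'a fps) e = m2 * fps_nth u e + l2 * fps_nth v e"
        using coef[OF M2] by blast
      obtain m3 l3 where 3: "\<forall>e\<in>{e1,e2,e3}. fps_nth (fps_X ^ e3 :: 'a fps) e = m3 * fps_nth u e + l3 * fps_nth v e"
        using coef[OF M3] by blast
      have d: "e2 \<noteq> e1" "e3 \<noteq> e1" "e3 \<noteq> e2" using dist by auto
      note q1 = 1[rule_format, of e1, simplified] 1[rule_format, of e2, simplified] 1[rule_format, of e3, simplified]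
      note q2 = 2[rule_format, of e1, simplified] 2[rule_format, of e2, simplified] 2[rule_format, of e3, simplified]
      note q3 = 3[rule_format, of e1, simplified] 3[rule_format, of e2, simplified] 3[rule_format, of e3, simplified]
      show False
        apply (rule det3[of m1 "fps_nth u e1" l1 "fps_nth v e1" "fps_nth u e2" "fps_nth v e2"
              "fps_nth u e3" "fps_nth v e3" m2 l2 m3 l3])
        using q1 q2 q3 dist d by (simp_all only: if_True if_False fps_X_power_nth)
    qed
  qed
qed

end
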